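(* Let $M_1\in\mathbb{R}^{a\times d}$, $M_2\in\mathbb{R}^{b\times d}$, and let $\Psi_1:\mathbb{R}^s\to\mathbb{R}^{a\times s}$, $\Psi_2:\mathbb{R}^s\to\mathbb{R}^{b\times s}$ be arbitrary functions; set $\Phi_i(w)=\Psi_i(w)w$ for $i=1,2$. Let $X\in\mathbb{R}^d$, $w\in\mathbb{R}^s$, and $$Z_1=M_1X+\Phi_1(w),\qquad Z_2=M_2X+\Phi_2(w).$$ Let $L_1=\sup_{w'\in\mathbb{R}^s}\|\Psi_1(w')\|$, $L_2=\sup_{w'\in\mathbb{R}^s}\|\Psi_2(w')\|$ (assumed finite), and $\alpha=\inf_{w'\in\mathbb{R}^s}\sigma_{\min}\big((I-M_1M_1^+)\Psi_1(w')\big)$. Assume $\mathrm{Null}(M_1)\subseteq\mathrm{Null}(M_2)$. Then: (i) if $w=0$, then $\|Z_2\|\le\sigma_{\max}(M_2M_1^+)\|Z_1\|$; (ii) if $\alpha>0$, then $\|Z_2\|\le\big((1+L_1/\alpha)\,\sigma_{\max}(M_2M_1^+)+L_2/\alpha\big)\|Z_1\|$.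
   Context: $\|\cdot\|$ is the Euclidean norm on vectors and the induced operator (spectral) norm on matrices. For a matrix $M$, $\sigma_{\max}(M)=\max_{\|x\|=1}\|Mx\|$, $\sigma_{\min}(M)=\min_{\|x\|=1}\|Mx\|$ (which is zero if $M$ does not have full column rank), and $M^+$ is the Moore–Penrose pseudo-inverse. *)

theory Defs
  imports "HOL-Analysis.Analysis"
begin

definition is_mp_pinv :: "real^'n^'m \<Rightarrow> real^'m^'n \<Rightarrow> bool" where
  "is_mp_pinv A P \<longleftrightarrow> A ** P ** A = A \<and> P ** A ** P = P \<and>
     transpose (A ** P) = A ** P \<and> transpose (P ** A) = P ** A"

definition mp_pinv :: "real^'n^'m \<Rightarrow> real^'m^'n" where
  "mp_pinv A = (THE P. is_mp_pinv A P)"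

text \<open>Largest singular value = induced (spectral) operator norm.\<close>
definition sigma_max :: "real^'n^'m \<Rightarrow> real" where
  "sigma_max A = onorm (\<lambda>x. A *v x)"

definition sigma_min :: "real^'n^'m \<Rightarrow> real" where
  "sigma_min A = Inf ((\<lambda>x. norm (A *v x)) ` {x. norm x = 1})"

end

theory Submission
  imports Defs
begin

lemma proj_exists:
  fixes S :: "'a::euclidean_space set"
  assumes "subspace S"
  shows "\<exists>p. linear p \<and> (\<forall>x. p x \<in> S) \<and> (\<forall>x. \<forall>s\<in>S. (x - p x) \<bullet> s = 0)"
proof -
  have "\<exists>v1 v2. v1 \<in> span S \<and> (\<forall>w \<in> span S. orthogonal v2 w) \<and> x = v1 + v2" for x
    by (force intro: orthogonal_subspace_decomp_exists [of S x])
  then obtain p1 p2 where p1span: "\<And>x. p1 x \<in> span S"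
      and ort: "\<And>x w. w \<in> span S \<Longrightarrow> orthogonal (p2 x) w"
      and eq: "\<And>x. x = p1 x + p2 x"
    by metis
  have p1S: "p1 x \<in> S" for x using p1span assms span_eq_iff by blast
  have orth: "(x - p1 x) \<bullet> s = 0" if "s \<in> S" for x s
  proof -
    have "x - p1 x = p2 x" by (metis eq add_diff_cancel_left')
    then show ?thesis using ort[of s x] that by (simp add: span_base orthogonal_def)
  qed
  have uniq: "y = p1 x" if "y \<in> S" "\<And>s. s \<in> S \<Longrightarrow> (x - y) \<bullet> s = 0" for x y
  proof -
    have d: "y - p1 x \<in> S" using that(1) p1S assms by (simp add: subspace_diff)
    have "(x - p1 x) \<bullet> (y - p1 x) - (x - y) \<bullet> (y - p1 x) = 0"
      using orth[OF d] that(2)[OF d] by simp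
    then have "(y - p1 x) \<bullet> (y - p1 x) = 0" by (simp add: algebra_simps inner_diff_left inner_diff_right)
    then show ?thesis by simp
  qed
  have "linear p1"
  proof (rule linearI)
    fix x y
    show "p1 (x + y) = p1 x + p1 y"
    proof (rule uniq[symmetric])
      show "p1 x + p1 y \<in> S" using p1S assms by (simp add: subspace_add)
      fix s assume s: "s \<in> S"
      have "(x + y - (p1 x + p1 y)) \<bullet> s = (x - p1 x) \<bullet> s + (y - p1 y) \<bullet> s"
        by (simp add: inner_diff_left inner_add_left)
      then show "(x + y - (p1 x + p1 y)) \<bullet> s = 0" using orth[OF s] by simp
    qed
    fix c :: real
    show "p1 (c *\<^sub>R x) = c *\<^sub>R p1 x"
    proof (rule uniq[symmetric])
      show "c *\<^sub>R p1 x \<in> S" using p1S assms by (simp add: subspace_scale)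
      fix s assume s: "s \<in> S"
      have "(c *\<^sub>R x - c *\<^sub>R p1 x) \<bullet> s = c * ((x - p1 x) \<bullet> s)"
        by (simp add: inner_diff_left right_diff_distrib)
      then show "(c *\<^sub>R x - c *\<^sub>R p1 x) \<bullet> s = 0" using orth[OF s] by simp
    qed
  qed
  then show ?thesis using p1S orth by blast
qed

lemma proj_props:
  fixes S :: "'a::euclidean_space set"
  assumes "subspace S" "\<forall>x. p x \<in> S" "\<forall>x. \<forall>s\<in>S. (x - p x) \<bullet> s = 0"
  shows "\<And>s. s \<in> S \<Longrightarrow> p s = s" "\<And>x y. p x \<bullet> y = x \<bullet> p y"
proof -
  have uniq: "y = p x" if "y \<in> S" "\<And>s. s \<in> S \<Longrightarrow> (x - y) \<bullet> s = 0" for x y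
  proof -
    have d: "y - p x \<in> S" using that(1) assms by (simp add: subspace_diff)
    have "(x - p x) \<bullet> (y - p x) - (x - y) \<bullet> (y - p x) = 0"
      using assms(3) d that(2)[OF d] by simp
    then have "(y - p x) \<bullet> (y - p x) = 0" by (simp add: algebra_simps inner_diff_left inner_diff_right)
    then show ?thesis by simp
  qed
  show "p s = s" if "s \<in> S" for s using uniq[of s s] that by simp
  fix x y
  have "p x \<bullet> y = p x \<bullet> p y + p x \<bullet> (y - p y)" by (simp add: inner_diff_right)
  also have "\<dots> = p x \<bullet> p y" using assms by (simp add: inner_commute)
  also have "\<dots> = x \<bullet> p y - (x - p x) \<bullet> p y" by (simp add: inner_diff_left)
  also have "\<dots> = x \<bullet> p y" using assms by simp
  finally show "p x \<bullet> y = x \<bullet> p y" .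
qed

lemma sym_matrix:
  fixes M :: "real^'n^'n"
  assumes "\<And>x y. (M *v x) \<bullet> y = x \<bullet> (M *v y)"
  shows "transpose M = M"
proof -
  have "transpose M *v x = M *v x" for x
  proof -
    have "(transpose M *v x - M *v x) \<bullet> y = 0" for y
      using assms[of x y] by (simp add: inner_diff_left dot_lmul_matrix)
    then show ?thesis by (metis inner_eq_zero_iff right_minus_eq)
  qed
  then show ?thesis by (simp add: matrix_eq)
qed

lemma mp_unique:
  fixes A :: "real^'n^'m"
  assumes "is_mp_pinv A P" "is_mp_pinv A Q"
  shows "P = Q"
proof -
  have a: "A ** P ** A = A" "P ** A ** P = P" "transpose (A ** P) = A ** P" "transpose (P ** A) = P ** A"
    and b: "A ** Q ** A = A" "Q ** A ** Q = Q" "transpose (A ** Q) = A ** Q" "transpose (Q ** A) = Q ** A"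
    using assms unfolding is_mp_pinv_def by auto
  have "P = P ** (A ** P)" using a by (simp add: matrix_mul_assoc)
  also have "\<dots> = P ** transpose (A ** P)" using a by simp
  also have "\<dots> = P ** transpose P ** transpose A" by (simp add: matrix_transpose_mul matrix_mul_assoc)
  also have "\<dots> = P ** transpose P ** transpose (A ** Q ** A)" using b by simp
  also have "\<dots> = P ** transpose (A ** P) ** transpose (A ** Q)"
    by (simp add: matrix_transpose_mul matrix_mul_assoc)
  also have "\<dots> = P ** A ** P ** A ** Q" using a b by (simp add: matrix_mul_assoc)
  also have "\<dots> = P ** A ** Q" using a by (simp add: matrix_mul_assoc)
  finally have 1: "P = P ** A ** Q" .
  have "Q = (Q ** A) ** Q" using b by (simp add: matrix_mul_assoc)
  also have "\<dots> = transpose (Q ** A) ** Q" using b by simp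
  also have "\<dots> = transpose A ** transpose Q ** Q" by (simp add: matrix_transpose_mul matrix_mul_assoc)
  also have "\<dots> = transpose (A ** P ** A) ** transpose Q ** Q" using a by simp
  also have "\<dots> = transpose (P ** A) ** transpose (Q ** A) ** Q"
    by (simp add: matrix_transpose_mul matrix_mul_assoc)
  also have "\<dots> = P ** A ** Q ** A ** Q" using a b by (simp add: matrix_mul_assoc)
  also have "\<dots> = P ** A ** Q" using b by (metis matrix_mul_assoc)
  finally show ?thesis using 1 by simp
qed

lemma mp_exists:
  fixes A :: "real^'n^'m"
  shows "\<exists>P. is_mp_pinv A P"
proof -
  let ?f = "\<lambda>x. A *v x"
  have lf: "linear ?f" by (rule matrix_vector_mul_linear)
  define N where "N = {x. A *v x = 0}"
  define C where "C = range ?f"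
  have sN: "subspace N" unfolding N_def subspace_def
    using linear_add[OF lf] linear_scale[OF lf] linear_0[OF lf] by auto
  have sC: "subspace C" unfolding C_def subspace_def
  proof (intro conjI ballI allI)
    show "0 \<in> range ?f" using linear_0[OF lf] by (metis rangeI)
    fix x y assume "x \<in> range ?f" "y \<in> range ?f"
    then obtain u v where "x = A *v u" "y = A *v v" by blast
    then show "x + y \<in> range ?f" using linear_add[OF lf, of u v] by (metis rangeI)
  next
    fix c :: real and x assume "x \<in> range ?f"
    then obtain u where "x = A *v u" by blast
    then show "c *\<^sub>R x \<in> range ?f" using linear_scale[OF lf, of c u] by (metis rangeI)
  qed
  obtain pN where pN: "linear pN" "\<forall>x. pN x \<in> N" "\<forall>x. \<forall>s\<in>N. (x - pN x) \<bullet> s = 0"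
    using proj_exists[OF sN] by blast
  obtain pC where pC: "linear pC" "\<forall>x. pC x \<in> C" "\<forall>x. \<forall>s\<in>C. (x - pC x) \<bullet> s = 0"
    using proj_exists[OF sC] by blast
  note pNp = proj_props[OF sN pN(2,3)]
  note pCp = proj_props[OF sC pC(2,3)]
  define q where "q x = x - pN x" for x
  have lq: "linear q" unfolding q_def using pN(1) by (intro linear_compose_sub) (auto simp: linear_ident)
  have qN: "q n = 0" if "n \<in> N" for n using pNp(1)[OF that] by (simp add: q_def)
  have Aq: "A *v q x = A *v x" for x
    using pN(2) by (simp add: q_def N_def matrix_vector_mult_diff_distrib)
  have qq: "q (q x) = q x" for x
  proof -
    have "pN (q x) = 0" unfolding q_def using linear_diff[OF pN(1)] pNp(1) pN(2) by simp
    then show ?thesis by (simp add: q_def[of "q x"])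
  qed
  have qsym: "q x \<bullet> y = x \<bullet> q y" for x y
    using pNp(2)[of x y] by (simp add: q_def inner_diff_left inner_diff_right)
  have "\<forall>y. \<exists>x. A *v x = pC y" using pC(2) unfolding C_def by (metis imageE)
  then obtain g where g: "\<And>y. A *v g y = pC y" by metis
  define Pf where "Pf y = q (g y)" for y
  have APf: "A *v Pf y = pC y" for y by (simp add: Pf_def Aq g)
  have PfA: "Pf (A *v x) = q x" for x
  proof -
    have "A *v (g (A *v x) - x) = 0"
      using g pCp(1)[of "A *v x"] by (simp add: C_def matrix_vector_mult_diff_distrib)
    then have "q (g (A *v x) - x) = 0" using qN N_def by blast
    then show ?thesis by (simp add: Pf_def linear_diff[OF lq])
  qed
  have lPf: "linear Pf"
  proof (rule linearI)
    fix x y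
    have "A *v (g (x + y) - g x - g y) = 0"
      using g linear_add[OF pC(1)] by (simp add: matrix_vector_mult_diff_distrib)
    then have "q (g (x + y) - g x - g y) = 0" using qN N_def by blast
    then show "Pf (x + y) = Pf x + Pf y" by (simp add: Pf_def linear_diff[OF lq] linear_add[OF lq] algebra_simps)
    fix c :: real
    have "A *v (g (c *\<^sub>R x) - c *\<^sub>R g x) = 0"
      using g linear_scale[OF pC(1)] linear_scale[OF lf, of c "g x"] by (simp add: matrix_vector_mult_diff_distrib)
    then have "q (g (c *\<^sub>R x) - c *\<^sub>R g x) = 0" using qN N_def by blast
    then show "Pf (c *\<^sub>R x) = c *\<^sub>R Pf x" by (simp add: Pf_def linear_diff[OF lq] linear_scale[OF lq])
  qed
  define P where "P = matrix Pf"
  have Pv: "P *v y = Pf y" for y unfolding P_def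
    using lPf by (simp add: matrix_works linear_matrix_vector_mul_eq)
  have "is_mp_pinv A P" unfolding is_mp_pinv_def
  proof (intro conjI)
    show "A ** P ** A = A"
      by (simp add: matrix_eq matrix_vector_mul_assoc[symmetric] Pv PfA Aq)
    show "P ** A ** P = P"
      by (simp add: matrix_eq matrix_vector_mul_assoc[symmetric] Pv PfA) (simp add: Pf_def qq)
    show "transpose (A ** P) = A ** P"
      by (rule sym_matrix) (simp add: matrix_vector_mul_assoc[symmetric] Pv APf pCp(2))
    show "transpose (P ** A) = P ** A"
      by (rule sym_matrix) (simp add: matrix_vector_mul_assoc[symmetric] Pv PfA qsym)
  qed
  then show ?thesis by blast
qed

lemma mp_pinv_props:
  fixes A :: "real^'n^'m"
  shows "is_mp_pinv A (mp_pinv A)"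
  unfolding mp_pinv_def using mp_exists[of A] mp_unique[of A] by (metis theI)

lemma inner_transpose: "((M::real^'n^'m) *v x) \<bullet> y = x \<bullet> (transpose M *v y)"
  by (metis dot_lmul_matrix inner_commute transpose_matrix_vector)

lemma sigma_max_bound: "norm ((A::real^'n^'m) *v x) \<le> sigma_max A * norm x"
  unfolding sigma_max_def by (rule onorm[OF matrix_vector_mul_bounded_linear])

lemma sigma_max_nonneg: "0 \<le> sigma_max (A::real^'n^'m)"
  unfolding sigma_max_def by (rule onorm_pos_le[OF matrix_vector_mul_bounded_linear])

lemma sigma_min_nonneg: "0 \<le> sigma_min (A::real^'n^'m)"
  unfolding sigma_min_def
proof (rule cInf_greatest)
  show "(\<lambda>x. norm (A *v x)) ` {x. norm x = 1} \<noteq> {}"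
    using norm_axis_1[of undefined] by blast
qed auto

lemma sigma_min_le: "norm (u::real^'n) = 1 \<Longrightarrow> sigma_min (A::real^'n^'m) \<le> norm (A *v u)"
  unfolding sigma_min_def
  by (rule cInf_lower) (auto intro: bdd_belowI[where m=0])

lemma sigma_min_vec: "sigma_min (A::real^'n^'m) * norm w \<le> norm (A *v w)"
proof (cases "w = 0")
  case False
  then have n: "norm w > 0" by simp
  have "sigma_min A \<le> norm (A *v (inverse (norm w) *\<^sub>R w))"
    using False by (intro sigma_min_le) simp
  also have "\<dots> = norm (A *v w) / norm w" using n
    by (simp add: matrix_vector_mult_scaleR divide_inverse mult.commute)
  finally show ?thesis using n by (simp add: pos_le_divide_eq)
qed simp

theorem lemma3:
  fixes M1 :: "real^'d^'a" and M2 :: "real^'d^'b"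
    and Psi1 :: "real^'s \<Rightarrow> real^'s^'a" and Psi2 :: "real^'s \<Rightarrow> real^'s^'b"
    and X :: "real^'d" and w :: "real^'s"
    and Z1 :: "real^'a" and Z2 :: "real^'b" and L1 L2 \<alpha> :: real
  defines "Z1 \<equiv> M1 *v X + Psi1 w *v w"
    and "Z2 \<equiv> M2 *v X + Psi2 w *v w"
    and "L1 \<equiv> (SUP w'. sigma_max (Psi1 w'))"
    and "L2 \<equiv> (SUP w'. sigma_max (Psi2 w'))"
    and "\<alpha> \<equiv> (INF w'. sigma_min ((mat 1 - M1 ** mp_pinv M1) ** Psi1 w'))"
  assumes L1_fin: "bdd_above (range (\<lambda>w'. sigma_max (Psi1 w')))"
    and L2_fin: "bdd_above (range (\<lambda>w'. sigma_max (Psi2 w')))"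
    and null: "{x. M1 *v x = 0} \<subseteq> {x. M2 *v x = 0}"
  shows "(w = 0 \<longrightarrow> norm Z2 \<le> sigma_max (M2 ** mp_pinv M1) * norm Z1) \<and>
         (\<alpha> > 0 \<longrightarrow> norm Z2 \<le> ((1 + L1 / \<alpha>) * sigma_max (M2 ** mp_pinv M1) + L2 / \<alpha>) * norm Z1)"
proof -
  define P where "P = mp_pinv M1"
  define S where "S = M2 ** P"
  define \<sigma> where "\<sigma> = sigma_max S"
  have PM: "M1 ** P ** M1 = M1" "transpose (M1 ** P) = M1 ** P"
    using mp_pinv_props[of M1] unfolding is_mp_pinv_def P_def by auto
  have PM1': "M1 ** (P ** M1) = M1" using PM(1) by (simp add: matrix_mul_assoc)
  have key: "M2 *v x = S *v (M1 *v x)" for x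
  proof -
    have "M1 *v (x - P *v (M1 *v x)) = 0"
      using PM1' by (simp add: matrix_vector_mult_diff_distrib matrix_vector_mul_assoc)
    then have "M2 *v (x - P *v (M1 *v x)) = 0" using null by blast
    then show ?thesis by (simp add: S_def matrix_vector_mult_diff_distrib matrix_vector_mul_assoc matrix_mul_assoc)
  qed
  have sig0: "\<sigma> \<ge> 0" unfolding \<sigma>_def by (rule sigma_max_nonneg)
  have part1: "w = 0 \<longrightarrow> norm Z2 \<le> \<sigma> * norm Z1"
  proof
    assume "w = 0"
    then have "Z2 = S *v Z1" by (simp add: Z1_def Z2_def key)
    then show "norm Z2 \<le> \<sigma> * norm Z1" unfolding \<sigma>_def by (simp add: sigma_max_bound)
  qed
  have part2: "norm Z2 \<le> ((1 + L1 / \<alpha>) * \<sigma> + L2 / \<alpha>) * norm Z1" if apos: "\<alpha> > 0"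
  proof -
    define Q where "Q = mat 1 - M1 ** P"
    have Qv: "Q *v z = z - (M1 ** P) *v z" for z
      by (simp add: Q_def matrix_vector_mult_diff_rdistrib)
    have QZ1: "Q *v Z1 = (Q ** Psi1 w) *v w"
    proof -
      have "Q *v (M1 *v X) = 0"
        using PM1' by (simp only: Qv) (simp add: matrix_vector_mul_assoc matrix_mul_assoc)
      then show ?thesis
        by (simp add: Z1_def matrix_vector_right_distrib matrix_vector_mul_assoc)
    qed
    have Qcontr: "norm (Q *v z) \<le> norm z" for z
    proof -
      define u where "u = (M1 ** P) *v z"
      have idem: "(M1 ** P) *v u = u"
        unfolding u_def using PM1' by (simp add: matrix_vector_mul_assoc matrix_mul_assoc)
      have "u \<bullet> u = z \<bullet> u"
        using inner_transpose[of "M1 ** P" z u] PM(2) idem by (simp add: u_def)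
      then have o: "(Q *v z) \<bullet> u = 0" by (simp add: Qv u_def[symmetric] inner_diff_left)
      have "z = Q *v z + u" by (simp add: Qv u_def)
      then have "(norm z)\<^sup>2 = (norm (Q *v z))\<^sup>2 + (norm u)\<^sup>2"
        using norm_add_Pythagorean[of "Q *v z" u] o by (simp add: orthogonal_def)
      then have "(norm (Q *v z))\<^sup>2 \<le> (norm z)\<^sup>2" by simp
      then show ?thesis by (rule power2_le_imp_le) simp
    qed
    have al: "\<alpha> \<le> sigma_min (Q ** Psi1 w)"
      unfolding \<alpha>_def Q_def P_def
      by (rule cINF_lower) (auto intro: bdd_belowI[where m=0] sigma_min_nonneg)
    have "\<alpha> * norm w \<le> sigma_min (Q ** Psi1 w) * norm w"
      using al by (simp add: mult_right_mono)
    also have "\<dots> \<le> norm ((Q ** Psi1 w) *v w)" by (rule sigma_min_vec)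
    also have "\<dots> \<le> norm Z1" using Qcontr[of Z1] QZ1 by simp
    finally have wZ: "norm w \<le> norm Z1 / \<alpha>" using apos by (simp add: pos_le_divide_eq mult.commute)
    have sL1: "sigma_max (Psi1 w) \<le> L1" unfolding L1_def by (rule cSUP_upper[OF _ L1_fin]) simp
    have sL2: "sigma_max (Psi2 w) \<le> L2" unfolding L2_def by (rule cSUP_upper[OF _ L2_fin]) simp
    have L10: "L1 \<ge> 0" using sL1 sigma_max_nonneg[of "Psi1 w"] by linarith
    have L20: "L2 \<ge> 0" using sL2 sigma_max_nonneg[of "Psi2 w"] by linarith
    have n1: "norm (Psi1 w *v w) \<le> L1 * norm w"
      using sigma_max_bound[of "Psi1 w" w] sL1 by (meson mult_right_mono norm_ge_zero order_trans)
    have n2: "norm (Psi2 w *v w) \<le> L2 * norm w"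
      using sigma_max_bound[of "Psi2 w" w] sL2 by (meson mult_right_mono norm_ge_zero order_trans)
    have "Z2 = S *v (Z1 - Psi1 w *v w) + Psi2 w *v w"
      by (simp add: Z1_def Z2_def key)
    then have "norm Z2 \<le> norm (S *v (Z1 - Psi1 w *v w)) + norm (Psi2 w *v w)"
      by (simp add: norm_triangle_ineq)
    also have "\<dots> \<le> \<sigma> * norm (Z1 - Psi1 w *v w) + L2 * norm w"
      using n2 sigma_max_bound[of S] unfolding \<sigma>_def by (meson add_mono)
    also have "\<dots> \<le> \<sigma> * (norm Z1 + L1 * norm w) + L2 * norm w"
      using n1 sig0 norm_triangle_ineq4[of Z1 "Psi1 w *v w"]
      by (intro add_right_mono mult_left_mono) auto
    also have "\<dots> = \<sigma> * norm Z1 + (\<sigma> * L1 + L2) * norm w" by (simp add: algebra_simps)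
    also have "\<dots> \<le> \<sigma> * norm Z1 + (\<sigma> * L1 + L2) * (norm Z1 / \<alpha>)"
      using wZ sig0 L10 L20 by (intro add_left_mono mult_left_mono) auto
    also have "\<dots> = ((1 + L1 / \<alpha>) * \<sigma> + L2 / \<alpha>) * norm Z1"
      by (simp add: algebra_simps)
    finally show ?thesis .
  qed
  show ?thesis using part1 part2 unfolding \<sigma>_def S_def P_def by blast
qed

end
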